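(* Let $\mathbf{A}\in\mathbb{R}^{n\times d}$, $\mathbf{B}\in\mathbb{R}^{n\times d_B}$, $\mathbf{C}\in\mathbb{R}^{n_C\times d}$, and let $k\in[d_B]$, $r\in[n_C]$. Then $$P_{k,r}(x;\mathbf{A},\mathbf{B},\mathbf{C})=x^{d-n}\,P_{r,k}(x;\mathbf{A}^{\rm T},\mathbf{C}^{\rm T},\mathbf{B}^{\rm T}).$$
   Context: For a matrix $\mathbf{M}$, $\mathbf{M}_{R,S}$ is the submatrix with rows $R$, columns $S$; $\mathbf{M}_{:,S}$, $\mathbf{M}_{R,:}$ keep all rows, resp. columns; $\mathbf{M}^\dagger$ is the Moore–Penrose pseudoinverse, $\mathbf{M}_{R,S}^\dagger:=(\mathbf{M}_{R,S})^\dagger$; empty determinants equal $1$ and $\mathbf{M}_{:,\emptyset}\mathbf{M}_{:,\emptyset}^\dagger$, $\mathbf{M}_{\emptyset,:}^\dagger\mathbf{M}_{\emptyset,:}$ are zero matrices. For general $\mathbf{A}\in\mathbb{R}^{n\times d}$, $\mathbf{B}\in\mathbb{R}^{n\times d_B}$, $\mathbf{C}\in\mathbb{R}^{n_C\times d}$, $S\subset[d_B]$, $R\subset[n_C]$: $\mathbf{Q}_S=\mathbf{I}_n-\mathbf{B}_{:,S}\mathbf{B}_{:,S}^\dagger$, $\mathbf{P}_R=\mathbf{I}_d-\mathbf{C}_{R,:}^\dagger\mathbf{C}_{R,:}$, $p_{S,R}(x;\mathbf{A},\mathbf{B},\mathbf{C})=\det[x\mathbf{I}_d-(\mathbf{Q}_S\mathbf{A}\mathbf{P}_R)^{\rm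 T}(\mathbf{Q}_S\mathbf{A}\mathbf{P}_R)]$, and $P_{k,r}(x;\mathbf{A},\mathbf{B},\mathbf{C})=\sum_{R\subset[n_C],|R|=r}\sum_{S\subset[d_B],|S|=k}\det[\mathbf{C}_{R,:}\mathbf{C}_{R,:}^{\rm T}]\det[\mathbf{B}_{:,S}^{\rm T}\mathbf{B}_{:,S}]\,p_{S,R}(x;\mathbf{A},\mathbf{B},\mathbf{C})$. (For $P_{r,k}(x;\mathbf{A}^{\rm T},\mathbf{C}^{\rm T},\mathbf{B}^{\rm T})$ the same definition is applied with the roles $\mathbf{A}\to\mathbf{A}^{\rm T}\in\mathbb{R}^{d\times n}$, $\mathbf{B}\to\mathbf{C}^{\rm T}$, $\mathbf{C}\to\mathbf{B}^{\rm T}$.) *)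

theory Defs
  imports "Jordan_Normal_Form.DL_Submatrix" "Jordan_Normal_Form.Determinant"
begin

definition pinv :: "real mat \<Rightarrow> real mat" where
  "pinv M = (THE X. X \<in> carrier_mat (dim_col M) (dim_row M) \<and>
      M * X * M = M \<and> X * M * X = X \<and>
      transpose_mat (M * X) = M * X \<and> transpose_mat (X * M) = X * M)"

(* Q_S = I_n - B_{:,S} B_{:,S}^dagger   (indices are 0-based) *)
definition Qproj :: "real mat \<Rightarrow> nat set \<Rightarrow> real mat" where
  "Qproj B S = (let BS = submatrix B {0..<dim_row B} S in
      1\<^sub>m (dim_row B) - BS * pinv BS)"

definition Pproj :: "real mat \<Rightarrow> nat set \<Rightarrow> real mat" where
  "Pproj C R = (let CR = submatrix C R {0..<dim_col C} in
      1\<^sub>m (dim_col C) - pinv CR * CR)"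

definition pSR :: "nat set \<Rightarrow> nat set \<Rightarrow> real \<Rightarrow> real mat \<Rightarrow> real mat \<Rightarrow> real mat \<Rightarrow> real" where
  "pSR S R x A B C = (let M = Qproj B S * A * Pproj C R in
      det (x \<cdot>\<^sub>m 1\<^sub>m (dim_col A) - transpose_mat M * M))"

definition Pkr :: "nat \<Rightarrow> nat \<Rightarrow> real \<Rightarrow> real mat \<Rightarrow> real mat \<Rightarrow> real mat \<Rightarrow> real" where
  "Pkr k r x A B C =
     (\<Sum>R\<in>{R. R \<subseteq> {0..<dim_row C} \<and> card R = r}.
       \<Sum>S\<in>{S. S \<subseteq> {0..<dim_col B} \<and> card S = k}.
         det (submatrix C R {0..<dim_col C} * transpose_mat (submatrix C R {0..<dim_col C}))
       * det (transpose_mat (submatrix B {0..<dim_row B} S) * submatrix B {0..<dim_row B} S)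
       * pSR S R x A B C)"

end

theory Submission
  imports Defs
begin

definition outer :: "real vec \<Rightarrow> real vec \<Rightarrow> real mat" where
  "outer u w = mat (dim_vec u) (dim_vec w) (\<lambda>(i,j). u$i * w$j)"

lemma outer_carrier[simp]: "outer u w \<in> carrier_mat (dim_vec u) (dim_vec w)"
  by (simp add: outer_def)
lemma outer_dims[simp]: "dim_row (outer u w) = dim_vec u" "dim_col (outer u w) = dim_vec w"
  by (simp_all add: outer_def)

lemma mult_outer: assumes "A \<in> carrier_mat n m" "u \<in> carrier_vec m"
  shows "A * outer u w = outer (A *\<^sub>v u) w"
  using assms by (intro eq_matI) (auto simp: outer_def scalar_prod_def mult_mat_vec_def sum_distrib_left sum_distrib_right ac_simps)

lemma outer_mult_vec: assumes "w \<in> carrier_vec m" "x \<in> carrier_vec m"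
  shows "outer u w *\<^sub>v x = (w \<bullet> x) \<cdot>\<^sub>v u"
  using assms by (intro eq_vecI) (auto simp: outer_def scalar_prod_def mult_mat_vec_def sum_distrib_left ac_simps)

lemma transpose_outer: "transpose_mat (outer u w) = outer w u"
  by (intro eq_matI) (auto simp: outer_def)

lemma outer_zero: "outer u (0\<^sub>v m) = 0\<^sub>m (dim_vec u) m"
  by (intro eq_matI) (auto simp: outer_def)
lemma outer_zero1: "outer (0\<^sub>v m) u = 0\<^sub>m m (dim_vec u)"
  by (intro eq_matI) (auto simp: outer_def)

lemma outer_smult: "outer (c \<cdot>\<^sub>v u) w = c \<cdot>\<^sub>m outer u w"
  by (intro eq_matI) (auto simp: outer_def)

lemma outer_minus: assumes "u \<in> carrier_vec n" "u' \<in> carrier_vec n"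
  shows "outer (u - u') w = outer u w - outer u' w"
  using assms by (intro eq_matI) (auto simp: outer_def algebra_simps)

lemma transpose_zero_mat[simp]: "transpose_mat (0\<^sub>m a b) = 0\<^sub>m b a"
  by (intro eq_matI) auto

lemma smult_mat_vec: fixes A :: "real mat" assumes "A \<in> carrier_mat m n" "w \<in> carrier_vec n"
  shows "(c \<cdot>\<^sub>m A) *\<^sub>v w = c \<cdot>\<^sub>v (A *\<^sub>v w)"
  using assms by (intro eq_vecI) (auto simp: mult_mat_vec_def scalar_prod_def sum_distrib_left ac_simps intro!: sum.cong)

lemma transpose_smult: "transpose_mat (c \<cdot>\<^sub>m A) = c \<cdot>\<^sub>m transpose_mat A"
  by (intro eq_matI) auto

lemma mult_unit_vec: fixes M :: "real mat" assumes "M \<in> carrier_mat n d" "k < d"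
  shows "M *\<^sub>v unit_vec d k = col M k"
  using assms by (intro eq_vecI) (auto simp: mult_mat_vec_def scalar_prod_def unit_vec_def row_def col_def
     if_distrib cong: if_cong)+

lemma self_scalar_pos: fixes r :: "real vec" assumes "r \<noteq> 0\<^sub>v (dim_vec r)"
  shows "r \<bullet> r > 0"
proof -
  have nn: "r \<bullet> r = (\<Sum>i\<in>{0..<dim_vec r}. r$i * r$i)" by (simp add: scalar_prod_def)
  obtain i where i: "i < dim_vec r" "r$i \<noteq> 0" using assms by (metis eq_vecI index_zero_vec(1) index_zero_vec(2))
  have "r$i * r$i \<le> (\<Sum>i\<in>{0..<dim_vec r}. r$i * r$i)"
    by (rule member_le_sum) (use i in auto)
  moreover have "r$i * r$i > 0" using i(2) by (metis not_real_square_gt_zero)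
  ultimately show ?thesis using nn by linarith
qed


lemma proj_exists_k:
  fixes M :: "real mat" assumes M: "M \<in> carrier_mat n d"
  shows "k \<le> d \<Longrightarrow> \<exists>Z \<in> carrier_mat d n. transpose_mat (M*Z) = M*Z \<and> (M*Z)*(M*Z) = M*Z
     \<and> (\<forall>j<k. (M*Z) *\<^sub>v col M j = col M j)"
proof (induction k)
  case 0
  show ?case by (rule bexI[of _ "0\<^sub>m d n"]) (use M in \<open>auto intro!: eq_matI\<close>)
next
  case (Suc k)
  then obtain Z where Z: "Z \<in> carrier_mat d n" and sym: "transpose_mat (M*Z) = M*Z"
     and idem: "(M*Z)*(M*Z) = M*Z" and cols: "\<forall>j<k. (M*Z) *\<^sub>v col M j = col M j" by auto
  define P where "P = M*Z"
  have P: "P \<in> carrier_mat n n" using M Z by (simp add: P_def)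
  define v where "v = col M k"
  have kd: "k < d" using Suc by auto
  have v: "v \<in> carrier_vec n" using M kd by (simp add: v_def)
  define r where "r = v - P *\<^sub>v v"
  have r: "r \<in> carrier_vec n" using v P by (simp add: r_def)
  show ?case
  proof (cases "r = 0\<^sub>v n")
    case True
    have "P *\<^sub>v v = v" using True v P unfolding r_def
      by (metis carrier_vecD eq_vecI index_minus_vec(1) index_zero_vec(1) mult_mat_vec_carrier right_minus_eq index_minus_vec(2) index_zero_vec(2))
    then show ?thesis using Z sym idem cols unfolding P_def v_def
      by (intro bexI[of _ Z]) (auto simp: less_Suc_eq)
  next
    case False
    define c where "c = r \<bullet> r"
    have c: "c > 0" unfolding c_def using False r self_scalar_pos by auto
    define s where "s = 1 / c"
    define R where "R = outer r r"
    have dr: "dim_vec r = n" using r by simp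
    have R: "R \<in> carrier_mat n n" unfolding R_def using outer_carrier[of r r] unfolding dr .
    define Z' where "Z' = Z + s \<cdot>\<^sub>m outer (unit_vec d k - Z *\<^sub>v v) r"
    have du: "dim_vec (unit_vec d k - Z *\<^sub>v v) = d" using Z by simp
    have o1: "outer (unit_vec d k - Z *\<^sub>v v) r \<in> carrier_mat d n"
      using outer_carrier[of "unit_vec d k - Z *\<^sub>v v" r] unfolding du dr .
    have Z': "Z' \<in> carrier_mat d n" using Z o1 by (simp add: Z'_def)
    have "M *\<^sub>v (unit_vec d k - Z *\<^sub>v v) = r"
    proof -
      have "M *\<^sub>v (unit_vec d k - Z *\<^sub>v v) = M *\<^sub>v unit_vec d k - M *\<^sub>v (Z *\<^sub>v v)"
        using M Z v by (intro mult_minus_distrib_mat_vec) auto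
      also have "\<dots> = r" using M Z v kd unfolding r_def P_def v_def by (simp add: mult_unit_vec)
      finally show ?thesis .
    qed
    hence MZ': "M * Z' = P + s \<cdot>\<^sub>m R"
      unfolding Z'_def R_def P_def using M Z o1 v
      by (simp add: mult_add_distrib_mat[OF M Z] mult_smult_distrib mult_outer)
    have Pr: "P *\<^sub>v r = 0\<^sub>v n"
    proof -
      have "P *\<^sub>v r = P *\<^sub>v v - P *\<^sub>v (P *\<^sub>v v)" unfolding r_def using P v
        by (intro mult_minus_distrib_mat_vec) auto
      also have "P *\<^sub>v (P *\<^sub>v v) = P *\<^sub>v v" using P v idem unfolding P_def[symmetric]
        by (metis assoc_mult_mat_vec)
      finally show ?thesis using P v by auto
    qed
    have PR: "P * R = 0\<^sub>m n n" unfolding R_def using P r Pr by (simp add: mult_outer outer_zero1 dr)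
    have RP: "R * P = 0\<^sub>m n n"
    proof -
      have "transpose_mat (R * P) = transpose_mat P * transpose_mat R" using R P by (simp add: transpose_mult)
      also have "\<dots> = 0\<^sub>m n n" using sym PR unfolding P_def[symmetric] R_def transpose_outer by simp
      finally show ?thesis by (metis transpose_transpose transpose_zero_mat)
    qed
    have RR: "R * R = c \<cdot>\<^sub>m R" unfolding c_def
      using mult_outer[OF R[unfolded R_def] r, of r] outer_mult_vec[OF r r, of r] outer_smult
      unfolding R_def by simp
    have sym': "transpose_mat (P + s \<cdot>\<^sub>m R) = P + s \<cdot>\<^sub>m R"
      using P R sym unfolding P_def[symmetric]
      by (simp add: transpose_add transpose_smult R_def transpose_outer)
    have idem': "(P + s \<cdot>\<^sub>m R) * (P + s \<cdot>\<^sub>m R) = P + s \<cdot>\<^sub>m R"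
    proof -
      have sR: "s \<cdot>\<^sub>m R \<in> carrier_mat n n" using R by simp
      have PP: "P * P = P" using idem unfolding P_def .
      have e1: "P * (P + s \<cdot>\<^sub>m R) = P"
        using mult_add_distrib_mat[OF P P sR] mult_smult_distrib[OF P R] PR PP P by simp
      have e2: "(s \<cdot>\<^sub>m R) * (P + s \<cdot>\<^sub>m R) = s \<cdot>\<^sub>m R"
      proof -
        have "(s \<cdot>\<^sub>m R) * (P + s \<cdot>\<^sub>m R) = (s \<cdot>\<^sub>m R) * P + (s \<cdot>\<^sub>m R) * (s \<cdot>\<^sub>m R)"
          using mult_add_distrib_mat[OF sR P sR] .
        also have "\<dots> = 0\<^sub>m n n + s \<cdot>\<^sub>m (s \<cdot>\<^sub>m (c \<cdot>\<^sub>m R))"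
          using mult_smult_assoc_mat[OF R P] mult_smult_assoc_mat[OF R sR] mult_smult_distrib[OF R R] RP RR
          by simp
        also have "\<dots> = s \<cdot>\<^sub>m R" using c R by (intro eq_matI) (auto simp: s_def)
        finally show ?thesis .
      qed
      have "(P + s \<cdot>\<^sub>m R) * (P + s \<cdot>\<^sub>m R) = P * (P + s \<cdot>\<^sub>m R) + (s \<cdot>\<^sub>m R) * (P + s \<cdot>\<^sub>m R)"
        by (rule add_mult_distrib_mat[OF P sR, of "P + s \<cdot>\<^sub>m R" n]) (use P sR in simp)
      also have "\<dots> = P + s \<cdot>\<^sub>m R" using e1 e2 by simp
      finally show ?thesis .
    qed
    have cols': "(P + s \<cdot>\<^sub>m R) *\<^sub>v col M j = col M j" if j: "j < Suc k" for j
    proof -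
      have w: "col M j \<in> carrier_vec n" using M unfolding carrier_vec_def by auto
      have "(P + s \<cdot>\<^sub>m R) *\<^sub>v col M j = P *\<^sub>v col M j + s \<cdot>\<^sub>v ((r \<bullet> col M j) \<cdot>\<^sub>v r)"
        using P R w r unfolding R_def
        by (simp add: add_mult_distrib_mat_vec outer_mult_vec smult_mat_vec)
      also have "\<dots> = col M j"
      proof (cases "j < k")
        case True
        have "r \<bullet> col M j = v \<bullet> col M j - (P *\<^sub>v v) \<bullet> col M j"
          unfolding r_def using v P w by (simp add: minus_scalar_prod_distrib)
        also have "(P *\<^sub>v v) \<bullet> col M j = v \<bullet> (P *\<^sub>v col M j)"
          using transpose_vec_mult_scalar[OF P w v] sym unfolding P_def[symmetric] by simp
        finally have rc: "r \<bullet> col M j = 0" using cols True unfolding P_def by simp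
        have Pc: "P *\<^sub>v col M j = col M j" using cols True unfolding P_def by simp
        have dM: "dim_row M = n" using M by simp
        show ?thesis unfolding rc Pc using w r dM by (intro eq_vecI) (auto simp: carrier_vecD)
      next
        case False
        hence jk: "j = k" using j by simp
        have "(P *\<^sub>v r) \<bullet> v = r \<bullet> (P *\<^sub>v v)"
          using transpose_vec_mult_scalar[OF P v r] sym unfolding P_def[symmetric] by simp
        hence rPv: "r \<bullet> (P *\<^sub>v v) = 0" using Pr v by simp
        have vrp: "v = r + P *\<^sub>v v" unfolding r_def using v P by (auto intro!: eq_vecI)
        have Pv: "P *\<^sub>v v \<in> carrier_vec n" using P v by simp
        have "r \<bullet> v = r \<bullet> (r + P *\<^sub>v v)"
          by (rule arg_cong[where f="\<lambda>u. r \<bullet> u"]) (rule vrp)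
        also have "\<dots> = r \<bullet> r + r \<bullet> (P *\<^sub>v v)" by (rule scalar_prod_add_distrib[OF r r Pv])
        finally have "r \<bullet> v = c" unfolding c_def rPv by simp
        then have "P *\<^sub>v v + s \<cdot>\<^sub>v ((r \<bullet> v) \<cdot>\<^sub>v r) = P *\<^sub>v v + r" using c
          by (simp add: s_def smult_smult_assoc)
        also have "\<dots> = v" unfolding r_def using v P by (auto intro!: eq_vecI)
        finally show ?thesis using jk unfolding v_def by simp
      qed
      finally show ?thesis .
    qed
    show ?thesis using Z' MZ' sym' idem' cols' by (intro bexI[of _ Z']) auto
  qed
qed


lemma proj_exists:
  fixes M :: "real mat" assumes M: "M \<in> carrier_mat n d"
  shows "\<exists>Z \<in> carrier_mat d n. transpose_mat (M*Z) = M*Z \<and> M*Z*M = M"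
proof -
  obtain Z where Z: "Z \<in> carrier_mat d n" and sym: "transpose_mat (M*Z) = M*Z"
    and cols: "\<forall>j<d. (M*Z) *\<^sub>v col M j = col M j" using proj_exists_k[OF M, of d] by auto
  have "M*Z*M = M"
  proof (rule eq_matI)
    fix i j assume i: "i < dim_row M" and j: "j < dim_col M"
    have "(M*Z*M) $$ (i,j) = col (M*Z*M) j $ i" using i j M Z by simp
    also have "col (M*Z*M) j = (M*Z) *\<^sub>v col M j" using M Z j by (intro col_mult2) auto
    also have "\<dots> = col M j" using cols j M by auto
    finally show "(M*Z*M) $$ (i,j) = M $$ (i,j)" using i j by simp
  qed (use M Z in auto)
  then show ?thesis using Z sym by auto
qed

definition pconds :: "real mat \<Rightarrow> real mat \<Rightarrow> bool" where
  "pconds M X = (X \<in> carrier_mat (dim_col M) (dim_row M) \<and>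
      M * X * M = M \<and> X * M * X = X \<and>
      transpose_mat (M * X) = M * X \<and> transpose_mat (X * M) = X * M)"

lemma pconds_unique:
  assumes M: "M \<in> carrier_mat n d" and X: "pconds M X" and Y: "pconds M Y"
  shows "X = Y"
proof -
  have Xc: "X \<in> carrier_mat d n" and X1: "M*X*M = M" and X2: "X*M*X = X"
    and X3: "transpose_mat (M*X) = M*X" and X4: "transpose_mat (X*M) = X*M"
    using X M unfolding pconds_def by auto
  have Yc: "Y \<in> carrier_mat d n" and Y1: "M*Y*M = M" and Y2: "Y*M*Y = Y"
    and Y3: "transpose_mat (M*Y) = M*Y" and Y4: "transpose_mat (Y*M) = Y*M"
    using Y M unfolding pconds_def by auto
  have MX: "M*X \<in> carrier_mat n n" "X*M \<in> carrier_mat d d" using M Xc by auto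
  have MY: "M*Y \<in> carrier_mat n n" "Y*M \<in> carrier_mat d d" using M Yc by auto
  have A: "transpose_mat M = transpose_mat M * (M*Y)"
  proof -
    have "transpose_mat M = transpose_mat (M*Y*M)" using Y1 by simp
    also have "\<dots> = transpose_mat M * transpose_mat (M*Y)"
      by (rule transpose_mult[of "M*Y" n n M d]) (use M Yc in auto)
    finally show ?thesis using Y3 by simp
  qed
  have B: "transpose_mat M = X * M * transpose_mat M"
  proof -
    have "transpose_mat M = transpose_mat (M*(X*M))" using X1 M Xc by simp
    also have "\<dots> = transpose_mat (X*M) * transpose_mat M"
      using M Xc by (simp add: transpose_mult[of M n d "X*M" d])
    finally show ?thesis using X4 by simp
  qed
  have eX: "X = X * (M * Y)"
  proof -
    have "X = X * (M * X)" using X2 M Xc by simp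
    also have "\<dots> = X * transpose_mat (M * X)" using X3 by simp
    also have "\<dots> = X * (transpose_mat X * transpose_mat M)"
      using M Xc by (simp add: transpose_mult[of M n d X n])
    also have "\<dots> = X * (transpose_mat X * (transpose_mat M * (M*Y)))"
      by (simp only: A[symmetric])
    also have "\<dots> = X * ((transpose_mat X * transpose_mat M) * (M*Y))"
      using M Xc Yc assoc_mult_mat[of "transpose_mat X" n d "transpose_mat M" n "M*Y" n] by simp
    also have "transpose_mat X * transpose_mat M = M * X"
      using M Xc X3 by (simp add: transpose_mult[of M n d X n, symmetric])
    also have "X * ((M * X) * (M*Y)) = (X * (M * X)) * (M * Y)"
      by (rule assoc_mult_mat[symmetric, OF Xc MX(1) MY(1)])
    also have "X * (M * X) = X * M * X" by (rule assoc_mult_mat[symmetric, OF Xc M Xc])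
    also have "X * M * X = X" by (rule X2)
    finally show ?thesis .
  qed
  have eY: "Y = X * (M * Y)"
  proof -
    have "Y = (Y * M) * Y" using Y2 by simp
    also have "\<dots> = transpose_mat (Y * M) * Y" using Y4 by simp
    also have "\<dots> = (transpose_mat M * transpose_mat Y) * Y"
      using M Yc by (simp add: transpose_mult[of Y d n M d])
    also have "\<dots> = ((X * M * transpose_mat M) * transpose_mat Y) * Y"
      by (simp only: B[symmetric])
    also have "\<dots> = (X * M) * ((transpose_mat M * transpose_mat Y) * Y)"
      using M Xc Yc MX MY assoc_mult_mat[of "X*M" d d "transpose_mat M" n "transpose_mat Y" d]
        assoc_mult_mat[of "X*M" d d "transpose_mat M * transpose_mat Y" d Y n]
        assoc_mult_mat[of "transpose_mat M" d n "transpose_mat Y" d Y n] by simp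
    also have "transpose_mat M * transpose_mat Y = Y * M"
      using M Yc Y4 by (simp add: transpose_mult[of Y d n M d, symmetric])
    also have "(X * M) * ((Y * M) * Y) = X * (M * Y)" using Y2 M Xc Yc by simp
    finally show ?thesis .
  qed
  show ?thesis using eX eY by simp
qed


lemma pconds_exists:
  fixes M :: "real mat" assumes M: "M \<in> carrier_mat n d"
  shows "\<exists>X. pconds M X"
proof -
  obtain Z where Z: "Z \<in> carrier_mat d n" and Psym: "transpose_mat (M*Z) = M*Z" and PM: "M*Z*M = M"
    using proj_exists[OF M] by auto
  have Mt: "transpose_mat M \<in> carrier_mat d n" using M by simp
  obtain Z' where Z': "Z' \<in> carrier_mat n d" and Qsym: "transpose_mat (transpose_mat M*Z') = transpose_mat M*Z'"
    and QM: "transpose_mat M*Z'*transpose_mat M = transpose_mat M"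
    using proj_exists[OF Mt] by auto
  define Q where "Q = transpose_mat M * Z'"
  have Q: "Q \<in> carrier_mat d d" using Mt Z' by (simp add: Q_def)
  have Z't: "transpose_mat Z' \<in> carrier_mat d n" using Z' by simp
  have MQ: "M * Q = M"
  proof -
    have "transpose_mat (Q * transpose_mat M) = M * transpose_mat Q"
      using transpose_mult[OF Q Mt] by simp
    then show ?thesis using QM Qsym unfolding Q_def[symmetric] by simp
  qed
  have Qf: "Q = transpose_mat Z' * M"
  proof -
    have "Q = transpose_mat Q" using Qsym unfolding Q_def by simp
    also have "\<dots> = transpose_mat Z' * M" unfolding Q_def using transpose_mult[OF Mt Z'] by simp
    finally show ?thesis .
  qed
  define X where "X = Q * Z"
  have X: "X \<in> carrier_mat d n" using Q Z by (simp add: X_def)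
  have MX: "M * X = M * Z"
    unfolding X_def using assoc_mult_mat[OF M Q Z, symmetric] MQ by simp
  have XM: "X * M = Q"
  proof -
    have "X * M = Q * (Z * M)" unfolding X_def by (rule assoc_mult_mat[OF Q Z M])
    also have "\<dots> = transpose_mat Z' * (M * (Z * M))"
      unfolding Qf using assoc_mult_mat[OF Z't M, of "Z*M" d] Z M by simp
    also have "M * (Z * M) = M" using assoc_mult_mat[OF M Z M] PM by simp
    finally show ?thesis using Qf by simp
  qed
  have QQ: "Q * Q = Q"
  proof -
    have "Q * Q = transpose_mat Z' * (M * Q)" unfolding Qf[of] 
      using assoc_mult_mat[OF Z't M Q] Qf by simp
    then show ?thesis using MQ Qf by simp
  qed
  have "pconds M X"
    unfolding pconds_def
  proof (intro conjI)
    show "X \<in> carrier_mat (dim_col M) (dim_row M)" using X M by simp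
    show "M * X * M = M" using MX PM by simp
    show "X * M * X = X" using XM QQ assoc_mult_mat[OF Q Q Z] unfolding X_def by simp
    show "transpose_mat (M * X) = M * X" using MX Psym by simp
    show "transpose_mat (X * M) = X * M" using XM Qsym unfolding Q_def by simp
  qed
  then show ?thesis by blast
qed

lemma pinv_pconds: assumes M: "M \<in> carrier_mat n d" shows "pconds M (pinv M)"
proof -
  have ex1: "\<exists>!X. pconds M X" using pconds_exists[OF M] pconds_unique[OF M] by blast
  show ?thesis using theI'[OF ex1] unfolding pinv_def pconds_def by simp
qed

lemma pinv_eq: assumes M: "M \<in> carrier_mat n d" and X: "pconds M X" shows "pinv M = X"
  using pconds_unique[OF M pinv_pconds[OF M] X] .

lemma pinv_carrier: assumes M: "M \<in> carrier_mat n d" shows "pinv M \<in> carrier_mat d n"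
  using pinv_pconds[OF M] M unfolding pconds_def by simp

lemma pinv_transpose: assumes M: "M \<in> carrier_mat n d"
  shows "pinv (transpose_mat M) = transpose_mat (pinv M)"
proof (rule pinv_eq)
  show Mt: "transpose_mat M \<in> carrier_mat d n" using M by simp
  define X where "X = pinv M"
  have X: "X \<in> carrier_mat d n" using pinv_carrier[OF M] unfolding X_def .
  have X1: "M*X*M = M" and X2: "X*M*X = X" and X3: "transpose_mat (M*X) = M*X"
    and X4: "transpose_mat (X*M) = X*M"
    using pinv_pconds[OF M] unfolding X_def pconds_def by auto
  have Xt: "transpose_mat X \<in> carrier_mat n d" using X by simp
  have MX: "M*X \<in> carrier_mat n n" "X*M \<in> carrier_mat d d" using M X by auto
  have e1: "transpose_mat M * transpose_mat X = X * M"
    using transpose_mult[OF X M] X4 by simp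
  have e2: "transpose_mat X * transpose_mat M = M * X"
    using transpose_mult[OF M X] X3 by simp
  show "pconds (transpose_mat M) (transpose_mat (pinv M))"
    unfolding pconds_def X_def[symmetric]
  proof (intro conjI)
    show "transpose_mat X \<in> carrier_mat (dim_col (transpose_mat M)) (dim_row (transpose_mat M))"
      using X M by simp
    have t1: "transpose_mat (M*X*M) = transpose_mat M * (transpose_mat X * transpose_mat M)"
      using transpose_mult[OF MX(1) M] transpose_mult[OF M X] by simp
    show "transpose_mat M * transpose_mat X * transpose_mat M = transpose_mat M"
      using t1 assoc_mult_mat[OF Mt Xt Mt] X1 by simp
    have t2: "transpose_mat (X*M*X) = transpose_mat X * (transpose_mat M * transpose_mat X)"
      using transpose_mult[OF MX(2) X] transpose_mult[OF X M] by simp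
    show "transpose_mat X * transpose_mat M * transpose_mat X = transpose_mat X"
      using t2 assoc_mult_mat[OF Xt Mt Xt] X2 by simp
    show "transpose_mat (transpose_mat M * transpose_mat X) = transpose_mat M * transpose_mat X"
      using e1 X4 by simp
    show "transpose_mat (transpose_mat X * transpose_mat M) = transpose_mat X * transpose_mat M"
      using e2 X3 by simp
  qed
qed


lemma sylvester_det:
  fixes M :: "real mat" assumes M: "M \<in> carrier_mat n d" and x: "x \<noteq> 0"
  shows "det (x \<cdot>\<^sub>m 1\<^sub>m d - transpose_mat M * M)
       = x powi (int d - int n) * det (x \<cdot>\<^sub>m 1\<^sub>m n - M * transpose_mat M)"
proof -
  have Mt: "transpose_mat M \<in> carrier_mat d n" using M by simp
  define K where "K = four_block_mat (1\<^sub>m n) M (transpose_mat M) (x \<cdot>\<^sub>m 1\<^sub>m d)"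
  define L1 where "L1 = four_block_mat (1\<^sub>m n) (0\<^sub>m n d) (- transpose_mat M) (1\<^sub>m d)"
  define L2 where "L2 = four_block_mat (1\<^sub>m n) (0\<^sub>m n d) (- ((1/x) \<cdot>\<^sub>m transpose_mat M)) (1\<^sub>m d)"
  have K: "K \<in> carrier_mat (n+d) (n+d)" unfolding K_def using M by simp
  have L1: "L1 \<in> carrier_mat (n+d) (n+d)" unfolding L1_def by simp
  have L2: "L2 \<in> carrier_mat (n+d) (n+d)" unfolding L2_def by simp
  have dL1: "det L1 = 1" unfolding L1_def
    by (subst det_four_block_mat_upper_right_zero[of _ n _ d]) (use Mt in auto)
  have dL2: "det L2 = 1" unfolding L2_def
    by (subst det_four_block_mat_upper_right_zero[of _ n _ d]) (use Mt in auto)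
  have "L1 * K = four_block_mat (1\<^sub>m n) M (0\<^sub>m d n) (x \<cdot>\<^sub>m 1\<^sub>m d - transpose_mat M * M)"
    unfolding L1_def K_def
    apply (subst mult_four_block_mat[of _ n n _ d _ d])
    using M Mt apply (auto simp: )
    done
  moreover have "det (four_block_mat (1\<^sub>m n) M (0\<^sub>m d n) (x \<cdot>\<^sub>m 1\<^sub>m d - transpose_mat M * M))
     = det (1\<^sub>m n) * det (x \<cdot>\<^sub>m 1\<^sub>m d - transpose_mat M * M)"
    by (rule det_four_block_mat_lower_left_zero) (use M Mt in auto)
  ultimately have e1: "det K = det (x \<cdot>\<^sub>m 1\<^sub>m d - transpose_mat M * M)"
    using det_mult[OF L1 K] dL1 by simp
  have b1: "1\<^sub>m n + - (M * (1 / x \<cdot>\<^sub>m transpose_mat M)) = 1\<^sub>m n - (1/x) \<cdot>\<^sub>m (M * transpose_mat M)"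
    unfolding mult_smult_distrib[OF M Mt] using M by (intro eq_matI) auto
  have b2: "transpose_mat M + - (x \<cdot>\<^sub>m 1\<^sub>m d * (1 / x \<cdot>\<^sub>m transpose_mat M)) = 0\<^sub>m d n"
    unfolding mult_smult_assoc_mat[OF one_carrier_mat smult_carrier_mat[OF Mt]] using M Mt x
    by (intro eq_matI) auto
  have "K * L2 = four_block_mat (1\<^sub>m n - (1/x) \<cdot>\<^sub>m (M * transpose_mat M)) M (0\<^sub>m d n) (x \<cdot>\<^sub>m 1\<^sub>m d)"
    unfolding L2_def K_def
    apply (subst mult_four_block_mat[of _ n n _ d _ d])
    using M Mt apply (auto simp: )
    apply (simp add: b1 b2)
    done
  moreover have "det (four_block_mat (1\<^sub>m n - (1/x) \<cdot>\<^sub>m (M * transpose_mat M)) M (0\<^sub>m d n) (x \<cdot>\<^sub>m 1\<^sub>m d))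
     = det (1\<^sub>m n - (1/x) \<cdot>\<^sub>m (M * transpose_mat M)) * det (x \<cdot>\<^sub>m 1\<^sub>m d)"
    by (rule det_four_block_mat_lower_left_zero) (use M Mt in auto)
  ultimately have e2: "det K = det (1\<^sub>m n - (1/x) \<cdot>\<^sub>m (M * transpose_mat M)) * x ^ d"
    using det_mult[OF K L2] dL2 by simp
  have "1\<^sub>m n - (1/x) \<cdot>\<^sub>m (M * transpose_mat M) = (1/x) \<cdot>\<^sub>m (x \<cdot>\<^sub>m 1\<^sub>m n - M * transpose_mat M)"
    using M x by (intro eq_matI) (auto simp: field_simps)
  hence h1: "det (1\<^sub>m n - (1/x) \<cdot>\<^sub>m (M * transpose_mat M)) = (1/x)^n * det (x \<cdot>\<^sub>m 1\<^sub>m n - M * transpose_mat M)"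
    using M by simp
  have h2: "x ^ d * (1/x)^n = x powi (int d - int n)"
    using x by (simp add: power_int_diff power_divide field_simps)
  have "det (x \<cdot>\<^sub>m 1\<^sub>m d - transpose_mat M * M) = x ^ d * ((1/x)^n * det (x \<cdot>\<^sub>m 1\<^sub>m n - M * transpose_mat M))"
    using e1 e2 h1 by (simp add: ac_simps)
  also have "\<dots> = (x ^ d * (1/x)^n) * det (x \<cdot>\<^sub>m 1\<^sub>m n - M * transpose_mat M)"
    by (simp only: mult.assoc)
  finally show ?thesis unfolding h2 .
qed


lemma submatrix_transpose: "submatrix (transpose_mat A) I J = transpose_mat (submatrix A J I)"
proof (rule eq_matI)
  fix i j assume i: "i < dim_row (transpose_mat (submatrix A J I))"
    and j: "j < dim_col (transpose_mat (submatrix A J I))"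
  have i': "i < card {i. i < dim_col A \<and> i \<in> I}" using i unfolding index_transpose_mat(2) dim_submatrix(2) .
  have j': "j < card {j. j < dim_row A \<and> j \<in> J}" using j unfolding index_transpose_mat(3) dim_submatrix(1) .
  have "submatrix (transpose_mat A) I J $$ (i, j) = transpose_mat A $$ (pick I i, pick J j)"
    by (rule submatrix_index) (unfold index_transpose_mat(2,3), rule i', rule j')
  also have "\<dots> = A $$ (pick J j, pick I i)"
    by (rule index_transpose_mat(1)) (rule pick_le[OF i'], rule pick_le[OF j'])
  also have "\<dots> = submatrix A J I $$ (j, i)"
    by (rule submatrix_index[symmetric]) (rule j', rule i')
  also have "\<dots> = transpose_mat (submatrix A J I) $$ (i, j)"
    by (rule index_transpose_mat(1)[symmetric]) (unfold dim_submatrix, rule i', rule j')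
  finally show "submatrix (transpose_mat A) I J $$ (i, j) = transpose_mat (submatrix A J I) $$ (i, j)" .
next
  show "dim_row (submatrix (transpose_mat A) I J) = dim_row (transpose_mat (submatrix A J I))"
    by (simp only: dim_submatrix index_transpose_mat(2,3))
  show "dim_col (submatrix (transpose_mat A) I J) = dim_col (transpose_mat (submatrix A J I))"
    by (simp only: dim_submatrix index_transpose_mat(2,3))
qed

lemma card_range_lt: "card {j. j < (d::nat) \<and> j \<in> {0..<d}} = d"
proof -
  have "{j. j < d \<and> j \<in> {0..<d}} = {0..<d}" by auto
  then show ?thesis by simp
qed

lemma submatrix_cols_carrier: assumes "C \<in> carrier_mat nC d"
  shows "submatrix C R {0..<d} \<in> carrier_mat (card {i. i < nC \<and> i \<in> R}) d"
proof -
  have r: "dim_row C = nC" "dim_col C = d" using assms by auto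
  show ?thesis unfolding carrier_mat_def mem_Collect_eq dim_submatrix r card_range_lt by (intro conjI refl)
qed

lemma submatrix_rows_carrier: assumes "B \<in> carrier_mat n dB"
  shows "submatrix B {0..<n} S \<in> carrier_mat n (card {j. j < dB \<and> j \<in> S})"
proof -
  have r: "dim_row B = n" "dim_col B = dB" using assms by auto
  show ?thesis unfolding carrier_mat_def mem_Collect_eq dim_submatrix r card_range_lt by (intro conjI refl)
qed

lemma Qproj_transpose: assumes C: "C \<in> carrier_mat nC d"
  shows "Qproj (transpose_mat C) R = transpose_mat (Pproj C R)"
proof -
  define CR where "CR = submatrix C R {0..<d}"
  have CR: "CR \<in> carrier_mat (card {i. i < nC \<and> i \<in> R}) d"
    unfolding CR_def by (rule submatrix_cols_carrier[OF C])
  have pc: "pinv CR \<in> carrier_mat d (card {i. i < nC \<and> i \<in> R})" by (rule pinv_carrier[OF CR])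
  have "Qproj (transpose_mat C) R = 1\<^sub>m d - transpose_mat CR * pinv (transpose_mat CR)"
    unfolding Qproj_def Let_def CR_def using C by (simp add: submatrix_transpose)
  also have "\<dots> = 1\<^sub>m d - transpose_mat (pinv CR * CR)"
    using pinv_transpose[OF CR] transpose_mult[OF pc CR] by simp
  also have "\<dots> = transpose_mat (1\<^sub>m d - pinv CR * CR)"
    using transpose_minus[of "1\<^sub>m d" d d "pinv CR * CR"] pc CR by simp
  also have "1\<^sub>m d - pinv CR * CR = Pproj C R"
    unfolding Pproj_def Let_def CR_def using C by simp
  finally show ?thesis .
qed

lemma Pproj_transpose: assumes B: "B \<in> carrier_mat n dB"
  shows "Pproj (transpose_mat B) S = transpose_mat (Qproj B S)"
proof -
  define BS where "BS = submatrix B {0..<n} S"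
  have BS: "BS \<in> carrier_mat n (card {j. j < dB \<and> j \<in> S})"
    unfolding BS_def by (rule submatrix_rows_carrier[OF B])
  have pc: "pinv BS \<in> carrier_mat (card {j. j < dB \<and> j \<in> S}) n" by (rule pinv_carrier[OF BS])
  have "Pproj (transpose_mat B) S = 1\<^sub>m n - pinv (transpose_mat BS) * transpose_mat BS"
    unfolding Pproj_def Let_def BS_def using B by (simp add: submatrix_transpose)
  also have "\<dots> = 1\<^sub>m n - transpose_mat (BS * pinv BS)"
    using pinv_transpose[OF BS] transpose_mult[OF BS pc] by simp
  also have "\<dots> = transpose_mat (1\<^sub>m n - BS * pinv BS)"
    using transpose_minus[of "1\<^sub>m n" n n "BS * pinv BS"] pc BS by simp
  also have "1\<^sub>m n - BS * pinv BS = Qproj B S"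
    unfolding Qproj_def Let_def BS_def using B by simp
  finally show ?thesis .
qed

lemma Qproj_carrier: assumes B: "B \<in> carrier_mat n dB" shows "Qproj B S \<in> carrier_mat n n"
proof -
  define BS where "BS = submatrix B {0..<n} S"
  have BS: "BS \<in> carrier_mat n (card {j. j < dB \<and> j \<in> S})"
    unfolding BS_def by (rule submatrix_rows_carrier[OF B])
  have pc: "pinv BS \<in> carrier_mat (card {j. j < dB \<and> j \<in> S}) n" by (rule pinv_carrier[OF BS])
  have c: "BS * pinv BS \<in> carrier_mat n n" using BS pc by simp
  have dB: "dim_row B = n" using B by simp
  show ?thesis unfolding Qproj_def Let_def dB BS_def[symmetric] by (rule minus_carrier_mat[OF c])
qed

lemma Pproj_carrier: assumes C: "C \<in> carrier_mat nC d" shows "Pproj C R \<in> carrier_mat d d"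
proof -
  define CR where "CR = submatrix C R {0..<d}"
  have CR: "CR \<in> carrier_mat (card {i. i < nC \<and> i \<in> R}) d"
    unfolding CR_def by (rule submatrix_cols_carrier[OF C])
  have pc: "pinv CR \<in> carrier_mat d (card {i. i < nC \<and> i \<in> R})" by (rule pinv_carrier[OF CR])
  have c: "pinv CR * CR \<in> carrier_mat d d" using CR pc by simp
  have dC: "dim_col C = d" using C by simp
  show ?thesis unfolding Pproj_def Let_def dC CR_def[symmetric] by (rule minus_carrier_mat[OF c])
qed

lemma pSR_transpose:
  assumes A: "A \<in> carrier_mat n d" and B: "B \<in> carrier_mat n dB" and C: "C \<in> carrier_mat nC d"
    and x: "x \<noteq> 0"
  shows "pSR S R x A B C = x powi (int d - int n) * pSR R S x (transpose_mat A) (transpose_mat C) (transpose_mat B)"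
proof -
  define Q where "Q = Qproj B S"
  define P where "P = Pproj C R"
  have Q: "Q \<in> carrier_mat n n" unfolding Q_def by (rule Qproj_carrier[OF B])
  have P: "P \<in> carrier_mat d d" unfolding P_def by (rule Pproj_carrier[OF C])
  define M where "M = Q * A * P"
  have M: "M \<in> carrier_mat n d" unfolding M_def using Q A P by simp
  have M': "Qproj (transpose_mat C) R * transpose_mat A * Pproj (transpose_mat B) S = transpose_mat M"
  proof -
    have "Qproj (transpose_mat C) R * transpose_mat A * Pproj (transpose_mat B) S
        = transpose_mat P * transpose_mat A * transpose_mat Q"
      unfolding P_def Q_def Qproj_transpose[OF C] Pproj_transpose[OF B] ..
    also have "\<dots> = transpose_mat P * (transpose_mat A * transpose_mat Q)"
      by (rule assoc_mult_mat[of _ d d _ n _ n]) (use Q A P in auto)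
    also have "transpose_mat A * transpose_mat Q = transpose_mat (Q * A)"
      by (rule transpose_mult[OF Q A, symmetric])
    also have "transpose_mat P * transpose_mat (Q * A) = transpose_mat M"
      unfolding M_def by (rule transpose_mult[OF mult_carrier_mat[OF Q A] P, symmetric])
    finally show ?thesis .
  qed
  have dA: "dim_col (transpose_mat A) = n" "dim_col A = d" using A by auto
  have h1: "pSR R S x (transpose_mat A) (transpose_mat C) (transpose_mat B)
      = det (x \<cdot>\<^sub>m 1\<^sub>m n - M * transpose_mat M)"
    unfolding pSR_def Let_def M' dA transpose_transpose by (rule refl)
  have h2: "pSR S R x A B C = det (x \<cdot>\<^sub>m 1\<^sub>m d - transpose_mat M * M)"
    unfolding pSR_def Let_def Q_def[symmetric] P_def[symmetric] M_def[symmetric] dA by (rule refl)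
  show ?thesis unfolding h1 h2 by (rule sylvester_det[OF M x])
qed

theorem proposition3p1:
  fixes A B C :: "real mat" and n d dB nC k r :: nat and x :: real
  assumes "A \<in> carrier_mat n d" and "B \<in> carrier_mat n dB" and "C \<in> carrier_mat nC d"
    and "1 \<le> k" and "k \<le> dB" and "1 \<le> r" and "r \<le> nC"
    and "x \<noteq> 0"
  shows "Pkr k r x A B C =
    x powi (int d - int n) * Pkr r k x (transpose_mat A) (transpose_mat C) (transpose_mat B)"
proof -
  have A: "A \<in> carrier_mat n d" and B: "B \<in> carrier_mat n dB" and C: "C \<in> carrier_mat nC d"
    and x: "x \<noteq> 0" using assms by auto
  have dims: "dim_row C = nC" "dim_col C = d" "dim_row B = n" "dim_col B = dB"
    using B C by auto
  define RR where "RR = {R. R \<subseteq> {0..<nC} \<and> card R = r}"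
  define SS where "SS = {S. S \<subseteq> {0..<dB} \<and> card S = k}"
  define wC where "wC R = det (submatrix C R {0..<d} * transpose_mat (submatrix C R {0..<d}))" for R
  define wB where "wB S = det (transpose_mat (submatrix B {0..<n} S) * submatrix B {0..<n} S)" for S
  define c where "c = x powi (int d - int n)"
  have L: "Pkr k r x A B C = (\<Sum>R\<in>RR. \<Sum>S\<in>SS. wC R * wB S * pSR S R x A B C)"
    unfolding Pkr_def dims RR_def SS_def wC_def wB_def ..
  have Rt: "Pkr r k x (transpose_mat A) (transpose_mat C) (transpose_mat B)
     = (\<Sum>S\<in>SS. \<Sum>R\<in>RR. wB S * wC R * pSR R S x (transpose_mat A) (transpose_mat C) (transpose_mat B))"
    unfolding Pkr_def index_transpose_mat(2,3) dims RR_def SS_def wC_def wB_def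
      submatrix_transpose transpose_transpose ..
  have "Pkr k r x A B C
     = (\<Sum>R\<in>RR. \<Sum>S\<in>SS. c * (wB S * wC R * pSR R S x (transpose_mat A) (transpose_mat C) (transpose_mat B)))"
    unfolding L c_def pSR_transpose[OF A B C x] by (simp add: ac_simps)
  also have "\<dots> = c * (\<Sum>R\<in>RR. \<Sum>S\<in>SS. wB S * wC R * pSR R S x (transpose_mat A) (transpose_mat C) (transpose_mat B))"
    by (simp add: sum_distrib_left)
  also have "(\<Sum>R\<in>RR. \<Sum>S\<in>SS. wB S * wC R * pSR R S x (transpose_mat A) (transpose_mat C) (transpose_mat B))
     = (\<Sum>S\<in>SS. \<Sum>R\<in>RR. wB S * wC R * pSR R S x (transpose_mat A) (transpose_mat C) (transpose_mat B))"
    by (rule sum.swap)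
  finally show ?thesis unfolding Rt c_def .
qed

end
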